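(* Let $A\in\mathbb{C}^{m\times n}$. Then there exists $X\in A\{1,4^{\mathfrak{m}}\}$ if and only if there exists $Y\in A\{1,2,4^{\mathfrak{m}}\}$.
   Context: For a positive integer $k$, the Minkowski metric matrix of order $k$ is $G_k=\mathrm{diag}(1,-I_{k-1})$ (with $G_1=(1)$). For $A\in\mathbb{C}^{m\times n}$, the Minkowski adjoint is $A^{\sim}=G_nA^*G_m$, where $A^*$ is the conjugate transpose. For $A\in\mathbb{C}^{m\times n}$ and $X\in\mathbb{C}^{n\times m}$ consider the equations $(1)\ AXA=A$, $(2)\ XAX=X$, $(3^{\mathfrak{m}})\ (AX)^{\sim}=AX$, $(4^{\mathfrak{m}})\ (XA)^{\sim}=XA$; $A\{i,\dots,k\}$ denotes the set of all $X$ satisfying the listed equations. *)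

theory Defs
  imports "Jordan_Normal_Form.Matrix" Complex_Main
begin

definition mink_G :: "nat \<Rightarrow> complex mat" where
  "mink_G k = mat k k (\<lambda>(i, j). if i = j then (if i = 0 then 1 else -1) else 0)"

definition conj_trans :: "complex mat \<Rightarrow> complex mat" where
  "conj_trans A = map_mat cnj (transpose_mat A)"

definition mink_adj :: "complex mat \<Rightarrow> complex mat" where
  "mink_adj A = mink_G (dim_col A) * conj_trans A * mink_G (dim_row A)"

end

theory Submission
  imports Defs
begin

theorem theorem4p5:
  fixes A :: "complex mat" and m n :: nat
  assumes "0 < m" and "0 < n" and "A \<in> carrier_mat m n"
  shows "(\<exists>X \<in> carrier_mat n m. A * X * A = A \<and> mink_adj (X * A) = X * A)
     \<longleftrightarrow> (\<exists>Y \<in> carrier_mat n m. A * Y * A = A \<and> Y * A * Y = Y \<and> mink_adj (Y * A) = Y * A)"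
proof
  assume "\<exists>X \<in> carrier_mat n m. A * X * A = A \<and> mink_adj (X * A) = X * A"
  then obtain X where X: "X \<in> carrier_mat n m" and h1: "A * X * A = A" and h4: "mink_adj (X * A) = X * A"
    by blast
  note Ac = assms(3)
  have XA: "X * A \<in> carrier_mat n n" using X Ac by simp
  define Y where "Y = X * A * X"
  have Yc: "Y \<in> carrier_mat n m" using X Ac by (simp add: Y_def)
  have h1': "A * (X * A) = A" using h1 assoc_mult_mat[OF Ac X Ac] by simp
  have XAXA: "(X * A) * (X * A) = X * A"
    using assoc_mult_mat[OF X Ac XA] h1' by simp
  have YA: "Y * A = X * A"
    using assoc_mult_mat[OF XA X Ac] XAXA by (simp add: Y_def)
  have e1: "A * Y * A = A" using assoc_mult_mat[OF Ac Yc Ac] YA h1' by simp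
  have "Y * A * Y = (X * A) * ((X * A) * X)" using YA Y_def by simp
  also have "\<dots> = ((X * A) * (X * A)) * X" using assoc_mult_mat[OF XA XA X] by simp
  also have "\<dots> = Y" using XAXA by (simp add: Y_def)
  finally have e2: "Y * A * Y = Y" .
  have e3: "mink_adj (Y * A) = Y * A" using YA h4 by simp
  show "\<exists>Y \<in> carrier_mat n m. A * Y * A = A \<and> Y * A * Y = Y \<and> mink_adj (Y * A) = Y * A"
    using Yc e1 e2 e3 by blast
next
  assume "\<exists>Y \<in> carrier_mat n m. A * Y * A = A \<and> Y * A * Y = Y \<and> mink_adj (Y * A) = Y * A"
  then show "\<exists>X \<in> carrier_mat n m. A * X * A = A \<and> mink_adj (X * A) = X * A" by blast
qed

end
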